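(* Let $\varphi:\Lambda\to\Gamma$ be a regular covering map of degree $n$ of finite simplicial graphs without isolated vertices, with $|V\Gamma|=m$. Order $V\Lambda$ so that each fiber forms a consecutive block, the blocks being $V_1,\dots,V_m$, and order $V\Gamma$ as $\varphi(V_1),\dots,\varphi(V_m)$. Let $F\in\mathrm{Aut}(A_\Lambda)$ be a lift of $f\in\mathrm{Aut}(A_\Gamma)$. Then the $nm\times nm$ matrix $\tilde M$ of the action of $F$ on $H_1(A_\Lambda)$ is a blow up of the $m\times m$ matrix $M$ of the action of $f$ on $H_1(A_\Gamma)$.
   Context: $A_\Gamma$ is the right-angled Artin group with generators $V\Gamma$ and relations $[a,b]=1$ for edges; $H_1(A_\Gamma)\cong\mathbb Z^{V\Gamma}$ with basis the vertices, and the matrix of an automorphism has as the column of a vertex $v$ the coordinates of the image of $v$. A covering map $\varphi:\Lambda\to\Gamma$ is a surjective simplicial map mapping the neighbours of each vertex $u$ bijectively onto the neighbours of $\varphi(u)$; regular means the group of graph automorphisms $\mu$ of $\Lambda$ with $\varphi\mu=\varphi$ acts transitively on each fiber; the degree is the common fiber size. $\phi:A_\Lambda\to A_\Gamma$ is induced by $\varphi$, and $F$ is a lift of $f$ if $f\circ\phi=\phi\circ F$. An $nm\times nm$ matrix $\tilde M$ with $n\times n$ blocks is a blow up of an $m\times m$ matrix $M$ if, for all $i,j$, every column of the $(i,j)$ block of $\tilde M$ has all entries $0$ except one entry equal to $M(i,j)$. *)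

theory Defs
  imports "HOL-Algebra.Group"
begin

definition simple_graph :: "'v set \<Rightarrow> ('v \<Rightarrow> 'v \<Rightarrow> bool) \<Rightarrow> bool" where
  "simple_graph V E \<longleftrightarrow> finite V \<and> (\<forall>u w. E u w \<longrightarrow> u \<in> V \<and> w \<in> V)
     \<and> (\<forall>u w. E u w \<longrightarrow> E w u) \<and> (\<forall>u. \<not> E u u)"

definition no_isolated :: "'v set \<Rightarrow> ('v \<Rightarrow> 'v \<Rightarrow> bool) \<Rightarrow> bool" where
  "no_isolated V E \<longleftrightarrow> (\<forall>v\<in>V. \<exists>w. E v w)"

definition covering_map ::
  "'a set \<Rightarrow> ('a \<Rightarrow> 'a \<Rightarrow> bool) \<Rightarrow> 'b set \<Rightarrow> ('b \<Rightarrow> 'b \<Rightarrow> bool) \<Rightarrow> ('a \<Rightarrow> 'b) \<Rightarrow> bool" where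
  "covering_map VL EL VG EG p \<longleftrightarrow> p ` VL = VG
     \<and> (\<forall>u w. EL u w \<longrightarrow> EG (p u) (p w))
     \<and> (\<forall>u\<in>VL. bij_betw p {w. EL u w} {y. EG (p u) y})"

definition graph_aut :: "'a set \<Rightarrow> ('a \<Rightarrow> 'a \<Rightarrow> bool) \<Rightarrow> ('a \<Rightarrow> 'a) \<Rightarrow> bool" where
  "graph_aut V E \<mu> \<longleftrightarrow> bij_betw \<mu> V V \<and> (\<forall>u\<in>V. \<forall>w\<in>V. E (\<mu> u) (\<mu> w) \<longleftrightarrow> E u w)"

definition deck_group ::
  "'a set \<Rightarrow> ('a \<Rightarrow> 'a \<Rightarrow> bool) \<Rightarrow> ('a \<Rightarrow> 'b) \<Rightarrow> ('a \<Rightarrow> 'a) set" where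
  "deck_group VL EL p = {\<mu>. graph_aut VL EL \<mu> \<and> (\<forall>u\<in>VL. p (\<mu> u) = p u)}"

definition regular_covering ::
  "'a set \<Rightarrow> ('a \<Rightarrow> 'a \<Rightarrow> bool) \<Rightarrow> 'b set \<Rightarrow> ('b \<Rightarrow> 'b \<Rightarrow> bool) \<Rightarrow> ('a \<Rightarrow> 'b) \<Rightarrow> bool" where
  "regular_covering VL EL VG EG p \<longleftrightarrow> covering_map VL EL VG EG p
     \<and> (\<forall>u\<in>VL. \<forall>u'\<in>VL. p u = p u' \<longrightarrow> (\<exists>\<mu>\<in>deck_group VL EL p. \<mu> u = u'))"

definition fiber :: "'a set \<Rightarrow> ('a \<Rightarrow> 'b) \<Rightarrow> 'b \<Rightarrow> 'a set" where
  "fiber VL p x = {u \<in> VL. p u = x}"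

text \<open>Words in the generators and their inverses: a letter (v, True) is v, (v, False) is v^-1.\<close>

definition words :: "'v set \<Rightarrow> ('v \<times> bool) list set" where
  "words V = {w. \<forall>l \<in> set w. fst l \<in> V}"

inductive_set raag_step :: "'v set \<Rightarrow> ('v \<Rightarrow> 'v \<Rightarrow> bool) \<Rightarrow> (('v \<times> bool) list \<times> ('v \<times> bool) list) set"
  for V E where
  cancel: "\<lbrakk>xs \<in> words V; ys \<in> words V; a \<in> V\<rbrakk> \<Longrightarrow>
     (xs @ [(a, b), (a, \<not> b)] @ ys, xs @ ys) \<in> raag_step V E"
| comm: "\<lbrakk>xs \<in> words V; ys \<in> words V; a \<in> V; c \<in> V; E a c\<rbrakk> \<Longrightarrow>
     (xs @ [(a, b), (c, d)] @ ys, xs @ [(c, d), (a, b)] @ ys) \<in> raag_step V E"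

definition raag_eq :: "'v set \<Rightarrow> ('v \<Rightarrow> 'v \<Rightarrow> bool) \<Rightarrow> (('v \<times> bool) list \<times> ('v \<times> bool) list) set" where
  "raag_eq V E = (raag_step V E \<union> (raag_step V E)\<inverse>)\<^sup>*"

definition rep :: "'x set \<Rightarrow> 'x" where
  "rep X = (SOME x. x \<in> X)"

definition RAAG :: "'v set \<Rightarrow> ('v \<Rightarrow> 'v \<Rightarrow> bool) \<Rightarrow> ('v \<times> bool) list set monoid" where
  "RAAG V E = \<lparr> carrier = words V // raag_eq V E,
                mult = (\<lambda>X Y. raag_eq V E `` {rep X @ rep Y}),
                one = raag_eq V E `` {[]} \<rparr>"

definition raag_gen :: "'v set \<Rightarrow> ('v \<Rightarrow> 'v \<Rightarrow> bool) \<Rightarrow> 'v \<Rightarrow> ('v \<times> bool) list set" where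
  "raag_gen V E v = raag_eq V E `` {[(v, True)]}"

definition induced_hom ::
  "'b set \<Rightarrow> ('b \<Rightarrow> 'b \<Rightarrow> bool) \<Rightarrow> ('a \<Rightarrow> 'b) \<Rightarrow> ('a \<times> bool) list set \<Rightarrow> ('b \<times> bool) list set" where
  "induced_hom VG EG p X = raag_eq VG EG `` {map (\<lambda>(a, s). (p a, s)) (rep X)}"

text \<open>Coordinate of vertex v of the image in H_1(A_Gamma) = Z^V of a group element (exponent sum).\<close>
definition exp_sum :: "('v \<times> bool) list set \<Rightarrow> 'v \<Rightarrow> int" where
  "exp_sum X v = int (length (filter (\<lambda>l. l = (v, True)) (rep X)))
                - int (length (filter (\<lambda>l. l = (v, False)) (rep X)))"

text \<open>Matrix of an automorphism f on H_1, indexed by vertices: entry (w, v) is the w-coordinate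
  of the image of v (column of v = coordinates of f(v)).\<close>
definition H1_matrix :: "'v set \<Rightarrow> ('v \<Rightarrow> 'v \<Rightarrow> bool) \<Rightarrow> (('v \<times> bool) list set \<Rightarrow> ('v \<times> bool) list set)
    \<Rightarrow> 'v \<Rightarrow> 'v \<Rightarrow> int" where
  "H1_matrix V E f w v = exp_sum (f (raag_gen V E v)) w"

text \<open>Blow up, with rows/columns of the big matrix grouped into fibers: the (x,y) block consists of
  rows in the fiber over x and columns in the fiber over y.\<close>
definition blow_up :: "'a set \<Rightarrow> 'b set \<Rightarrow> ('a \<Rightarrow> 'b) \<Rightarrow> ('a \<Rightarrow> 'a \<Rightarrow> int) \<Rightarrow> ('b \<Rightarrow> 'b \<Rightarrow> int) \<Rightarrow> bool" where
  "blow_up VL VG p Mt M \<longleftrightarrow>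
     (\<forall>x\<in>VG. \<forall>y\<in>VG. \<forall>u\<in>fiber VL p y. \<exists>w\<in>fiber VL p x.
        Mt w u = M x y \<and> (\<forall>w'\<in>fiber VL p x. w' \<noteq> w \<longrightarrow> Mt w' u = 0))"

end

theory Submission
  imports Defs
begin

definition sg :: "bool \<Rightarrow> int" where "sg b = (if b then 1 else -1)"

fun es :: "('v \<times> bool) list \<Rightarrow> 'v \<Rightarrow> int" where
  "es [] v = 0"
| "es (l # xs) v = (if fst l = v then sg (snd l) else 0) + es xs v"

fun lk :: "'v \<Rightarrow> 'v \<Rightarrow> ('v \<times> bool) list \<Rightarrow> int" where
  "lk s t [] = 0"
| "lk s t (l # xs) = (if fst l = s then sg (snd l) * es xs t else 0) + lk s t xs"

lemma es_append[simp]: "es (xs @ ys) v = es xs v + es ys v"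
  by (induction xs) auto

lemma lk_append: "lk s t (xs @ ys) = lk s t xs + lk s t ys + es xs s * es ys t"
  by (induction xs) (auto simp: algebra_simps)

lemma es_filter: "int (length (filter (\<lambda>l. l = (v, True)) xs)) - int (length (filter (\<lambda>l. l = (v, False)) xs)) = es xs v"
  by (induction xs) (auto simp: sg_def)

lemma es_step: "(x, y) \<in> raag_step V E \<Longrightarrow> es x v = es y v"
  by (induct rule: raag_step.induct) (auto simp: sg_def)

lemma lk_step: "(x, y) \<in> raag_step V E \<Longrightarrow> s \<noteq> t \<Longrightarrow> \<not> E s t \<Longrightarrow> (\<forall>u w. E u w \<longrightarrow> E w u)
   \<Longrightarrow> lk s t x = lk s t y"
  by (induct rule: raag_step.induct) (auto simp: lk_append sg_def)

lemma eq_inv: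
  assumes "(x, y) \<in> raag_eq V E" "\<And>a b. (a, b) \<in> raag_step V E \<Longrightarrow> g a = g b"
  shows "g x = g y"
  using assms(1) unfolding raag_eq_def
proof (induction rule: rtrancl_induct)
  case base then show ?case by simp
next
  case (step y z) then show ?case using assms(2) by auto
qed

lemma step_words: "(x, y) \<in> raag_step V E \<Longrightarrow> x \<in> words V \<and> y \<in> words V"
  by (induct rule: raag_step.induct) (auto simp: words_def)

lemma eq_words: "(x, y) \<in> raag_eq V E \<Longrightarrow> x \<in> words V \<Longrightarrow> y \<in> words V"
  unfolding raag_eq_def
proof (induction rule: rtrancl_induct)
  case base then show ?case by simp
next
  case (step y z) then show ?case using step_words by blast
qed

lemma eq_refl: "(x, x) \<in> raag_eq V E"
  by (simp add: raag_eq_def)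

lemma eq_sym: "(x, y) \<in> raag_eq V E \<Longrightarrow> (y, x) \<in> raag_eq V E"
proof -
  assume "(x, y) \<in> raag_eq V E"
  then have "(y, x) \<in> ((raag_step V E \<union> (raag_step V E)\<inverse>)\<inverse>)\<^sup>*"
    unfolding raag_eq_def by (rule rtrancl_converseI)
  then show ?thesis unfolding raag_eq_def by (simp add: converse_Un Un_commute)
qed

lemma eq_trans: "(x, y) \<in> raag_eq V E \<Longrightarrow> (y, z) \<in> raag_eq V E \<Longrightarrow> (x, z) \<in> raag_eq V E"
  unfolding raag_eq_def by (rule rtrancl_trans)

lemma step_app: "(x, y) \<in> raag_step V E \<Longrightarrow> zs \<in> words V \<Longrightarrow> ws \<in> words V
   \<Longrightarrow> (zs @ x @ ws, zs @ y @ ws) \<in> raag_step V E"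
proof (induct rule: raag_step.induct)
  case (cancel xs ys a b)
  then have "((zs @ xs) @ [(a, b), (a, \<not> b)] @ (ys @ ws), (zs @ xs) @ (ys @ ws)) \<in> raag_step V E"
    by (intro raag_step.cancel) (auto simp: words_def)
  then show ?case by simp
next
  case (comm xs ys a c b d)
  then have "((zs @ xs) @ [(a, b), (c, d)] @ (ys @ ws), (zs @ xs) @ [(c, d), (a, b)] @ (ys @ ws)) \<in> raag_step V E"
    by (intro raag_step.comm) (auto simp: words_def)
  then show ?case by simp
qed

lemma eq_app: "(x, y) \<in> raag_eq V E \<Longrightarrow> zs \<in> words V \<Longrightarrow> ws \<in> words V
   \<Longrightarrow> (zs @ x @ ws, zs @ y @ ws) \<in> raag_eq V E"
  unfolding raag_eq_def
proof (induction rule: rtrancl_induct)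
  case base then show ?case by simp
next
  case (step y z)
  then have "(zs @ y @ ws, zs @ z @ ws) \<in> raag_step V E \<union> (raag_step V E)\<inverse>"
    using step_app by blast
  then show ?case using step by (meson rtrancl.rtrancl_into_rtrancl)
qed

lemma in_cls: "xs \<in> raag_eq V E `` {xs}"
  by (simp add: eq_refl)

lemma rep_cls: "(xs, rep (raag_eq V E `` {xs})) \<in> raag_eq V E"
proof -
  have "rep (raag_eq V E `` {xs}) \<in> raag_eq V E `` {xs}"
    unfolding rep_def by (rule someI, rule in_cls)
  then show ?thesis by simp
qed

lemma cls_eqI: "(x, y) \<in> raag_eq V E \<Longrightarrow> raag_eq V E `` {x} = raag_eq V E `` {y}"
  by (auto intro: eq_trans eq_sym)

lemma cls_eqD: "raag_eq V E `` {x} = raag_eq V E `` {y} \<Longrightarrow> (x, y) \<in> raag_eq V E"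
  using in_cls[of y V E] by auto

lemma rep_carrier:
  assumes "X \<in> carrier (RAAG V E)"
  shows "rep X \<in> words V \<and> X = raag_eq V E `` {rep X}"
proof -
  from assms obtain xs where xs: "xs \<in> words V" "X = raag_eq V E `` {xs}"
    unfolding RAAG_def by (auto elim: quotientE)
  have r: "(xs, rep X) \<in> raag_eq V E" using rep_cls[of xs V E] xs(2) by simp
  have "rep X \<in> words V" by (rule eq_words[OF r xs(1)])
  moreover have "X = raag_eq V E `` {rep X}" using cls_eqI[OF r] xs(2) by simp
  ultimately show ?thesis by simp
qed

lemma cls_carrier: "xs \<in> words V \<Longrightarrow> raag_eq V E `` {xs} \<in> carrier (RAAG V E)"
  unfolding RAAG_def by (auto intro: quotientI)

lemma mult_def': "X \<otimes>\<^bsub>RAAG V E\<^esub> Y = raag_eq V E `` {rep X @ rep Y}"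
  by (simp add: RAAG_def)

lemma mult_cls:
  assumes "xs \<in> words V" "ys \<in> words V"
  shows "raag_eq V E `` {xs} \<otimes>\<^bsub>RAAG V E\<^esub> raag_eq V E `` {ys} = raag_eq V E `` {xs @ ys}"
proof -
  let ?r1 = "rep (raag_eq V E `` {xs})" and ?r2 = "rep (raag_eq V E `` {ys})"
  have 1: "(xs, ?r1) \<in> raag_eq V E" "(ys, ?r2) \<in> raag_eq V E" by (rule rep_cls)+
  have w: "?r1 \<in> words V" using 1 assms eq_words by blast
  have "([] @ xs @ ys, [] @ ?r1 @ ys) \<in> raag_eq V E" using eq_app[OF 1(1), of "[]" ys] assms
    by (simp add: words_def)
  moreover have "(?r1 @ ys @ [], ?r1 @ ?r2 @ []) \<in> raag_eq V E" using eq_app[OF 1(2), of ?r1 "[]"] w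
    by (simp add: words_def)
  ultimately have "(xs @ ys, ?r1 @ ?r2) \<in> raag_eq V E" by (auto intro: eq_trans)
  then have "raag_eq V E `` {xs @ ys} = raag_eq V E `` {?r1 @ ?r2}" by (rule cls_eqI)
  then show ?thesis unfolding mult_def' by simp
qed

lemma mult_carrier:
  assumes "X \<in> carrier (RAAG V E)" "Y \<in> carrier (RAAG V E)"
  shows "X \<otimes>\<^bsub>RAAG V E\<^esub> Y \<in> carrier (RAAG V E)"
proof -
  have "rep X \<in> words V" "rep Y \<in> words V" using assms rep_carrier by blast+
  then have "rep X @ rep Y \<in> words V" by (auto simp: words_def)
  then show ?thesis unfolding mult_def' by (rule cls_carrier)
qed

lemma exp_sum_es: "exp_sum X v = es (rep X) v"
  unfolding exp_sum_def by (rule es_filter)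

lemma es_cls: "exp_sum (raag_eq V E `` {xs}) v = es xs v"
proof -
  have "es xs v = es (rep (raag_eq V E `` {xs})) v"
    by (rule eq_inv[OF rep_cls, where g="\<lambda>x. es x v"]) (erule es_step)
  then show ?thesis unfolding exp_sum_es by simp
qed

lemma exp_sum_mult: "exp_sum (X \<otimes>\<^bsub>RAAG V E\<^esub> Y) v = exp_sum X v + exp_sum Y v"
  unfolding mult_def' es_cls by (simp add: exp_sum_es)

lemma comm_cross:
  assumes "X \<otimes>\<^bsub>RAAG V E\<^esub> Y = Y \<otimes>\<^bsub>RAAG V E\<^esub> X" "s \<noteq> t" "\<not> E s t" "\<forall>u w. E u w \<longrightarrow> E w u"
  shows "exp_sum X s * exp_sum Y t = exp_sum Y s * exp_sum X t"
proof -
  have e: "(rep X @ rep Y, rep Y @ rep X) \<in> raag_eq V E"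
    using assms(1) unfolding mult_def' by (rule cls_eqD)
  have "lk s t (rep X @ rep Y) = lk s t (rep Y @ rep X)"
    by (rule eq_inv[OF e, where g="lk s t"]) (erule lk_step[OF _ assms(2) assms(3) assms(4)])
  then have "lk s t (rep X) + lk s t (rep Y) + es (rep X) s * es (rep Y) t
      = lk s t (rep Y) + lk s t (rep X) + es (rep Y) s * es (rep X) t"
    unfolding lk_append .
  then show ?thesis unfolding exp_sum_es by linarith
qed

lemma lin_one:
  assumes hom: "\<forall>X\<in>carrier (RAAG V E). \<forall>Y\<in>carrier (RAAG V E). \<Phi> (X \<otimes>\<^bsub>RAAG V E\<^esub> Y) = \<Phi> X \<otimes>\<^bsub>RAAG V E\<^esub> \<Phi> Y"
  shows "exp_sum (\<Phi> (raag_eq V E `` {[]})) t = 0"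
proof -
  let ?O = "raag_eq V E `` {[]}"
  have w: "[] \<in> words V" by (simp add: words_def)
  have oc: "?O \<in> carrier (RAAG V E)" by (rule cls_carrier[OF w])
  have "?O \<otimes>\<^bsub>RAAG V E\<^esub> ?O = ?O" using mult_cls[OF w w] by simp
  then have "\<Phi> ?O = \<Phi> ?O \<otimes>\<^bsub>RAAG V E\<^esub> \<Phi> ?O" using hom[rule_format, OF oc oc] by simp
  then have "exp_sum (\<Phi> ?O) t = exp_sum (\<Phi> ?O \<otimes>\<^bsub>RAAG V E\<^esub> \<Phi> ?O) t"
    by (rule arg_cong[where f="\<lambda>X. exp_sum X t"])
  then show ?thesis unfolding exp_sum_mult by simp
qed

lemma lin_gen:
  assumes hom: "\<forall>X\<in>carrier (RAAG V E). \<forall>Y\<in>carrier (RAAG V E). \<Phi> (X \<otimes>\<^bsub>RAAG V E\<^esub> Y) = \<Phi> X \<otimes>\<^bsub>RAAG V E\<^esub> \<Phi> Y"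
    and v: "v \<in> V"
  shows "exp_sum (\<Phi> (raag_eq V E `` {[(v, b)]})) t = sg b * exp_sum (\<Phi> (raag_gen V E v)) t"
proof (cases b)
  case True then show ?thesis by (simp add: raag_gen_def sg_def)
next
  case False
  let ?A = "raag_eq V E `` {[(v, False)]}" and ?B = "raag_eq V E `` {[(v, True)]}"
  have w: "[(v, False)] \<in> words V" "[(v, True)] \<in> words V" using v by (auto simp: words_def)
  have st: "([] @ [(v, False), (v, \<not> False)] @ [], [] @ []) \<in> raag_step V E"
    using v by (intro raag_step.cancel) (auto simp: words_def)
  then have "([(v, False), (v, True)], []) \<in> raag_eq V E" by (simp add: raag_eq_def r_into_rtrancl)
  then have "raag_eq V E `` {[(v, False), (v, True)]} = raag_eq V E `` {[]}" by (rule cls_eqI)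
  then have "?A \<otimes>\<^bsub>RAAG V E\<^esub> ?B = raag_eq V E `` {[]}"
    using mult_cls[OF w] by simp
  then have "\<Phi> ?A \<otimes>\<^bsub>RAAG V E\<^esub> \<Phi> ?B = \<Phi> (raag_eq V E `` {[]})"
    using hom[rule_format, OF cls_carrier[OF w(1)] cls_carrier[OF w(2)]] by simp
  then have "exp_sum (\<Phi> ?A \<otimes>\<^bsub>RAAG V E\<^esub> \<Phi> ?B) t = exp_sum (\<Phi> (raag_eq V E `` {[]})) t"
    by (rule arg_cong[where f="\<lambda>X. exp_sum X t"])
  then have "exp_sum (\<Phi> ?A) t + exp_sum (\<Phi> ?B) t = 0"
    unfolding exp_sum_mult lin_one[OF hom] .
  then show ?thesis using False by (simp add: sg_def raag_gen_def)
qed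

lemma lin:
  assumes fin: "finite V"
    and hom: "\<forall>X\<in>carrier (RAAG V E). \<forall>Y\<in>carrier (RAAG V E). \<Phi> (X \<otimes>\<^bsub>RAAG V E\<^esub> Y) = \<Phi> X \<otimes>\<^bsub>RAAG V E\<^esub> \<Phi> Y"
    and xs: "xs \<in> words V"
  shows "exp_sum (\<Phi> (raag_eq V E `` {xs})) t = (\<Sum>v\<in>V. es xs v * exp_sum (\<Phi> (raag_gen V E v)) t)"
  using xs
proof (induction xs)
  case Nil
  then show ?case using lin_one[OF hom] by simp
next
  case (Cons l xs)
  obtain v b where l: "l = (v, b)" by (cases l)
  have v: "v \<in> V" and xsw: "xs \<in> words V" using Cons.prems l by (auto simp: words_def)
  have w1: "[(v, b)] \<in> words V" using v by (auto simp: words_def)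
  have split: "raag_eq V E `` {l # xs} = raag_eq V E `` {[(v, b)]} \<otimes>\<^bsub>RAAG V E\<^esub> raag_eq V E `` {xs}"
    using mult_cls[OF w1 xsw] l by simp
  have "exp_sum (\<Phi> (raag_eq V E `` {l # xs})) t
      = exp_sum (\<Phi> (raag_eq V E `` {[(v, b)]})) t + exp_sum (\<Phi> (raag_eq V E `` {xs})) t"
    unfolding split hom[rule_format, OF cls_carrier[OF w1] cls_carrier[OF xsw]] exp_sum_mult ..
  also have "\<dots> = sg b * exp_sum (\<Phi> (raag_gen V E v)) t + (\<Sum>w\<in>V. es xs w * exp_sum (\<Phi> (raag_gen V E w)) t)"
    using lin_gen[OF hom v] Cons.IH xsw by simp
  also have "\<dots> = (\<Sum>w\<in>V. es (l # xs) w * exp_sum (\<Phi> (raag_gen V E w)) t)"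
  proof -
    have "(\<Sum>w\<in>V. es (l # xs) w * exp_sum (\<Phi> (raag_gen V E w)) t)
       = (\<Sum>w\<in>V. (if v = w then sg b * exp_sum (\<Phi> (raag_gen V E w)) t else 0))
         + (\<Sum>w\<in>V. es xs w * exp_sum (\<Phi> (raag_gen V E w)) t)"
      unfolding sum.distrib[symmetric] by (rule sum.cong) (auto simp: l algebra_simps)
    then show ?thesis using v fin by simp
  qed
  finally show ?case .
qed

lemma map_step:
  assumes "(x, y) \<in> raag_step VL EL" "\<forall>u\<in>VL. p u \<in> VG" "\<forall>u w. EL u w \<longrightarrow> EG (p u) (p w)"
  shows "(map (\<lambda>(a, s). (p a, s)) x, map (\<lambda>(a, s). (p a, s)) y) \<in> raag_step VG EG"
  using assms(1)
proof (induct rule: raag_step.induct)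
  case (cancel xs ys a b)
  then have "(map (\<lambda>(a, s). (p a, s)) xs @ [(p a, b), (p a, \<not> b)] @ map (\<lambda>(a, s). (p a, s)) ys,
     map (\<lambda>(a, s). (p a, s)) xs @ map (\<lambda>(a, s). (p a, s)) ys) \<in> raag_step VG EG"
    using assms(2) by (intro raag_step.cancel) (auto simp: words_def)
  then show ?case by simp
next
  case (comm xs ys a c b d)
  then have "(map (\<lambda>(a, s). (p a, s)) xs @ [(p a, b), (p c, d)] @ map (\<lambda>(a, s). (p a, s)) ys,
     map (\<lambda>(a, s). (p a, s)) xs @ [(p c, d), (p a, b)] @ map (\<lambda>(a, s). (p a, s)) ys) \<in> raag_step VG EG"
    using assms(2,3) by (intro raag_step.comm) (auto simp: words_def)
  then show ?case by simp
qed

lemma map_eq: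
  assumes "(x, y) \<in> raag_eq VL EL" "\<forall>u\<in>VL. p u \<in> VG" "\<forall>u w. EL u w \<longrightarrow> EG (p u) (p w)"
  shows "(map (\<lambda>(a, s). (p a, s)) x, map (\<lambda>(a, s). (p a, s)) y) \<in> raag_eq VG EG"
  using assms(1) unfolding raag_eq_def
proof (induction rule: rtrancl_induct)
  case base then show ?case by simp
next
  case (step y z)
  then have "(map (\<lambda>(a, s). (p a, s)) y, map (\<lambda>(a, s). (p a, s)) z) \<in> raag_step VG EG \<union> (raag_step VG EG)\<inverse>"
    using map_step[OF _ assms(2,3)] by blast
  then show ?case using step by (meson rtrancl.rtrancl_into_rtrancl)
qed

lemma es_map:
  assumes "finite VL" "zs \<in> words VL"
  shows "es (map (\<lambda>(a, s). (p a, s)) zs) x = (\<Sum>w\<in>{w\<in>VL. p w = x}. es zs w)"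
  using assms(2)
proof (induction zs)
  case Nil then show ?case by simp
next
  case (Cons l zs)
  obtain a b where l: "l = (a, b)" by (cases l)
  have a: "a \<in> VL" and zw: "zs \<in> words VL" using Cons.prems l by (auto simp: words_def)
  have fin: "finite {w\<in>VL. p w = x}" using assms(1) by simp
  have "(\<Sum>w\<in>{w\<in>VL. p w = x}. es (l # zs) w)
     = (\<Sum>w\<in>{w\<in>VL. p w = x}. (if a = w then sg b else 0)) + (\<Sum>w\<in>{w\<in>VL. p w = x}. es zs w)"
    unfolding sum.distrib[symmetric] by (rule sum.cong) (auto simp: l)
  also have "\<dots> = (if p a = x then sg b else 0) + (\<Sum>w\<in>{w\<in>VL. p w = x}. es zs w)"
    using fin a by simp
  finally show ?case using Cons.IH zw l by simp
qed

theorem lemma8p3: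
  fixes VL :: "'a set" and EL :: "'a \<Rightarrow> 'a \<Rightarrow> bool"
    and VG :: "'b set" and EG :: "'b \<Rightarrow> 'b \<Rightarrow> bool"
    and p :: "'a \<Rightarrow> 'b" and n m :: nat
    and F :: "('a \<times> bool) list set \<Rightarrow> ('a \<times> bool) list set"
    and f :: "('b \<times> bool) list set \<Rightarrow> ('b \<times> bool) list set"
  assumes "simple_graph VL EL" and "simple_graph VG EG"
    and "no_isolated VL EL" and "no_isolated VG EG"
    and "regular_covering VL EL VG EG p"
    and "\<forall>x\<in>VG. card (fiber VL p x) = n"
    and "card VG = m"
    and "F \<in> iso (RAAG VL EL) (RAAG VL EL)"
    and "f \<in> iso (RAAG VG EG) (RAAG VG EG)"
    and "\<forall>X\<in>carrier (RAAG VL EL). f (induced_hom VG EG p X) = induced_hom VG EG p (F X)"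
  shows "blow_up VL VG p (H1_matrix VL EL F) (H1_matrix VG EG f)"
proof -
  have finL: "finite VL" and inL: "\<forall>u w. EL u w \<longrightarrow> u \<in> VL \<and> w \<in> VL"
    and symL: "\<forall>u w. EL u w \<longrightarrow> EL w u" and irrL: "\<forall>u. \<not> EL u u"
    using assms(1) unfolding simple_graph_def by auto
  have irrG: "\<forall>u. \<not> EG u u" using assms(2) unfolding simple_graph_def by auto
  have noisoL: "\<forall>v\<in>VL. \<exists>w. EL v w" using assms(3) unfolding no_isolated_def .
  have pVL: "p ` VL = VG" and edge: "\<forall>u w. EL u w \<longrightarrow> EG (p u) (p w)"
    and bij: "\<forall>u\<in>VL. bij_betw p {w. EL u w} {y. EG (p u) y}"
    using assms(5) unfolding regular_covering_def covering_map_def by auto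
  have Fhom: "\<forall>X\<in>carrier (RAAG VL EL). \<forall>Y\<in>carrier (RAAG VL EL). F (X \<otimes>\<^bsub>RAAG VL EL\<^esub> Y) = F X \<otimes>\<^bsub>RAAG VL EL\<^esub> F Y"
    and Fbij: "bij_betw F (carrier (RAAG VL EL)) (carrier (RAAG VL EL))"
    using assms(8) unfolding iso_def hom_def by auto
  define C where "C = carrier (RAAG VL EL)"
  define F' where "F' = inv_into C F"
  have Fcar: "\<And>X. X \<in> C \<Longrightarrow> F X \<in> C" using Fbij unfolding C_def by (meson bij_betwE)
  have F'car: "\<And>Y. Y \<in> C \<Longrightarrow> F' Y \<in> C" using Fbij unfolding F'_def C_def
    by (metis bij_betw_imp_surj_on inv_into_into)
  have FF': "\<And>Y. Y \<in> C \<Longrightarrow> F (F' Y) = Y" unfolding F'_def C_def using Fbij by (meson bij_betw_inv_into_right)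
  have F'F: "\<And>X. X \<in> C \<Longrightarrow> F' (F X) = X" unfolding F'_def C_def using Fbij by (meson bij_betw_inv_into_left)
  have F'hom: "\<forall>X\<in>carrier (RAAG VL EL). \<forall>Y\<in>carrier (RAAG VL EL). F' (X \<otimes>\<^bsub>RAAG VL EL\<^esub> Y) = F' X \<otimes>\<^bsub>RAAG VL EL\<^esub> F' Y"
  proof (intro ballI)
    fix X Y assume X: "X \<in> carrier (RAAG VL EL)" and Y: "Y \<in> carrier (RAAG VL EL)"
    have c: "F' X \<otimes>\<^bsub>RAAG VL EL\<^esub> F' Y \<in> C" using mult_carrier F'car X Y unfolding C_def by blast
    have "F (F' X \<otimes>\<^bsub>RAAG VL EL\<^esub> F' Y) = F (F' X) \<otimes>\<^bsub>RAAG VL EL\<^esub> F (F' Y)"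
      using Fhom F'car X Y unfolding C_def by blast
    also have "\<dots> = X \<otimes>\<^bsub>RAAG VL EL\<^esub> Y" using FF' X Y unfolding C_def by simp
    finally have "F (F' X \<otimes>\<^bsub>RAAG VL EL\<^esub> F' Y) = X \<otimes>\<^bsub>RAAG VL EL\<^esub> Y" .
    then show "F' (X \<otimes>\<^bsub>RAAG VL EL\<^esub> Y) = F' X \<otimes>\<^bsub>RAAG VL EL\<^esub> F' Y" using F'F[OF c] by simp
  qed
  have gen_car: "\<And>v. v \<in> VL \<Longrightarrow> raag_gen VL EL v \<in> C"
    unfolding raag_gen_def C_def by (rule cls_carrier) (simp add: words_def)
  define Mt where "Mt = H1_matrix VL EL F"
  have colsum: "\<And>v s. v \<in> VL \<Longrightarrow>
     (\<Sum>t\<in>VL. Mt t v * exp_sum (F' (raag_gen VL EL t)) s) = (if v = s then 1 else 0)"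
  proof -
    fix v s assume v: "v \<in> VL"
    let ?Y = "F (raag_gen VL EL v)"
    have Yc: "?Y \<in> carrier (RAAG VL EL)" using Fcar gen_car v unfolding C_def by blast
    have r: "rep ?Y \<in> words VL" "raag_eq VL EL `` {rep ?Y} = ?Y" using rep_carrier[OF Yc] by auto
    have l: "exp_sum (F' (raag_eq VL EL `` {rep ?Y})) s
        = (\<Sum>t\<in>VL. es (rep ?Y) t * exp_sum (F' (raag_gen VL EL t)) s)"
      by (rule lin[OF finL F'hom r(1)])
    have "(\<Sum>t\<in>VL. Mt t v * exp_sum (F' (raag_gen VL EL t)) s)
        = (\<Sum>t\<in>VL. es (rep ?Y) t * exp_sum (F' (raag_gen VL EL t)) s)"
      by (simp add: Mt_def H1_matrix_def exp_sum_es)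
    also have "\<dots> = exp_sum (F' ?Y) s" using l by (simp only: r(2))
    also have "F' ?Y = raag_gen VL EL v" using F'F gen_car v by blast
    also have "exp_sum (raag_gen VL EL v) s = (if v = s then 1 else 0)"
      unfolding raag_gen_def es_cls by (simp add: sg_def)
    finally show "(\<Sum>t\<in>VL. Mt t v * exp_sum (F' (raag_gen VL EL t)) s) = (if v = s then 1 else 0)" .
  qed
  have indep: "\<And>u a q c. u \<in> VL \<Longrightarrow> a \<in> VL \<Longrightarrow> u \<noteq> a \<Longrightarrow> q \<noteq> 0 \<Longrightarrow>
      (\<forall>t. q * Mt t a = c * Mt t u) \<Longrightarrow> False"
  proof -
    fix u a q c assume u: "u \<in> VL" and a: "a \<in> VL" and ua: "u \<noteq> a" and q: "q \<noteq> (0::int)"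
      and rel: "\<forall>t. q * Mt t a = c * Mt t u"
    let ?G = "\<lambda>t. exp_sum (F' (raag_gen VL EL t)) a"
    have "q = q * (\<Sum>t\<in>VL. Mt t a * ?G t)" using colsum[OF a, of a] by simp
    also have "\<dots> = (\<Sum>t\<in>VL. (q * Mt t a) * ?G t)" by (simp add: sum_distrib_left mult.assoc)
    also have "\<dots> = (\<Sum>t\<in>VL. (c * Mt t u) * ?G t)" using rel by simp
    also have "\<dots> = c * (\<Sum>t\<in>VL. Mt t u * ?G t)" by (simp add: sum_distrib_left mult.assoc)
    also have "\<dots> = 0" using colsum[OF u, of a] ua by simp
    finally show False using q by simp
  qed
  have cross: "\<And>u a s t. EL u a \<Longrightarrow> s \<noteq> t \<Longrightarrow> \<not> EL s t \<Longrightarrow> Mt s u * Mt t a = Mt s a * Mt t u"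
  proof -
    fix u a s t assume ua: "EL u a" and st: "s \<noteq> t" "\<not> EL s t"
    have u: "u \<in> VL" and a: "a \<in> VL" using inL ua by auto
    have wd: "[(u, True)] \<in> words VL" "[(a, True)] \<in> words VL" using u a by (auto simp: words_def)
    have "([] @ [(u, True), (a, True)] @ [], [] @ [(a, True), (u, True)] @ []) \<in> raag_step VL EL"
      using u a ua by (intro raag_step.comm) (auto simp: words_def)
    then have "([(u, True), (a, True)], [(a, True), (u, True)]) \<in> raag_eq VL EL"
      by (simp add: raag_eq_def r_into_rtrancl)
    then have "raag_eq VL EL `` {[(u, True), (a, True)]} = raag_eq VL EL `` {[(a, True), (u, True)]}"
      by (rule cls_eqI)
    then have "raag_gen VL EL u \<otimes>\<^bsub>RAAG VL EL\<^esub> raag_gen VL EL a = raag_gen VL EL a \<otimes>\<^bsub>RAAG VL EL\<^esub> raag_gen VL EL u"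
      unfolding raag_gen_def using mult_cls[OF wd] mult_cls[OF wd(2) wd(1)] by simp
    then have "F (raag_gen VL EL u \<otimes>\<^bsub>RAAG VL EL\<^esub> raag_gen VL EL a) = F (raag_gen VL EL a \<otimes>\<^bsub>RAAG VL EL\<^esub> raag_gen VL EL u)"
      by simp
    then have "F (raag_gen VL EL u) \<otimes>\<^bsub>RAAG VL EL\<^esub> F (raag_gen VL EL a) = F (raag_gen VL EL a) \<otimes>\<^bsub>RAAG VL EL\<^esub> F (raag_gen VL EL u)"
      using Fhom gen_car[OF u] gen_car[OF a] unfolding C_def by simp
    then have "exp_sum (F (raag_gen VL EL u)) s * exp_sum (F (raag_gen VL EL a)) t
       = exp_sum (F (raag_gen VL EL a)) s * exp_sum (F (raag_gen VL EL u)) t"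
      by (rule comm_cross) (use st symL in auto)
    then show "Mt s u * Mt t a = Mt s a * Mt t u" unfolding Mt_def H1_matrix_def .
  qed
  have atmost: "\<And>u w1 w2. u \<in> VL \<Longrightarrow> w1 \<in> VL \<Longrightarrow> w2 \<in> VL \<Longrightarrow> w1 \<noteq> w2 \<Longrightarrow> p w1 = p w2
      \<Longrightarrow> Mt w1 u \<noteq> 0 \<Longrightarrow> Mt w2 u \<noteq> 0 \<Longrightarrow> False"
  proof -
    fix u w1 w2 assume u: "u \<in> VL" and w: "w1 \<in> VL" "w2 \<in> VL" "w1 \<noteq> w2" "p w1 = p w2"
      and g: "Mt w1 u \<noteq> 0" "Mt w2 u \<noteq> 0"
    obtain a where ua: "EL u a" using noisoL u by blast
    have a: "a \<in> VL" using inL ua by blast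
    have uneqa: "u \<noteq> a" using irrL ua by blast
    have nadj: "\<not> EL w1 w2" using edge irrG w(4) by metis
    have nocommon: "\<And>t. EL w1 t \<Longrightarrow> EL w2 t \<Longrightarrow> False"
    proof -
      fix t assume "EL w1 t" "EL w2 t"
      then have t: "t \<in> VL" "EL t w1" "EL t w2" using inL symL by blast+
      then have "inj_on p {w. EL t w}" using bij bij_betw_def by blast
      then show False using t w by (auto dest: inj_onD)
    qed
    have rel: "\<forall>t. Mt w1 u * Mt t a = Mt w1 a * Mt t u"
    proof
      fix t
      show "Mt w1 u * Mt t a = Mt w1 a * Mt t u"
      proof (cases "t = w1")
        case True then show ?thesis by simp
      next
        case tne: False
        show ?thesis
        proof (cases "EL w1 t")
          case False
          then show ?thesis using cross[OF ua, of w1 t] tne by simp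
        next
          case True
          have n2: "\<not> EL w2 t" using nocommon True by blast
          have t2: "w2 \<noteq> t" using True nadj by blast
          have c2: "Mt w2 u * Mt t a = Mt w2 a * Mt t u" using cross[OF ua t2 n2] .
          have c12: "Mt w1 u * Mt w2 a = Mt w1 a * Mt w2 u" using cross[OF ua w(3) nadj] .
          have "Mt w2 u * (Mt w1 u * Mt t a) = Mt w1 u * (Mt w2 u * Mt t a)" by (simp add: ac_simps)
          also have "\<dots> = Mt w1 u * (Mt w2 a * Mt t u)" using c2 by simp
          also have "\<dots> = (Mt w1 u * Mt w2 a) * Mt t u" by (simp add: ac_simps)
          also have "\<dots> = (Mt w1 a * Mt w2 u) * Mt t u" using c12 by simp
          also have "\<dots> = Mt w2 u * (Mt w1 a * Mt t u)" by (simp add: ac_simps)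
          finally show ?thesis using g(2) by simp
        qed
      qed
    qed
    show False using indep[OF u a uneqa g(1) rel] .
  qed
  have sumfib: "\<And>u x. u \<in> VL \<Longrightarrow> H1_matrix VG EG f x (p u) = (\<Sum>w\<in>fiber VL p x. Mt w u)"
  proof -
    fix u x assume u: "u \<in> VL"
    have pin: "\<forall>u\<in>VL. p u \<in> VG" using pVL by blast
    have r: "([(u, True)], rep (raag_gen VL EL u)) \<in> raag_eq VL EL" unfolding raag_gen_def by (rule rep_cls)
    have "(map (\<lambda>(a, s). (p a, s)) [(u, True)], map (\<lambda>(a, s). (p a, s)) (rep (raag_gen VL EL u))) \<in> raag_eq VG EG"
      by (rule map_eq[OF r pin edge])
    then have "raag_eq VG EG `` {[(p u, True)]} = induced_hom VG EG p (raag_gen VL EL u)"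
      unfolding induced_hom_def using cls_eqI by simp
    then have ih: "induced_hom VG EG p (raag_gen VL EL u) = raag_gen VG EG (p u)" by (simp add: raag_gen_def)
    let ?Y = "F (raag_gen VL EL u)"
    have Yc: "?Y \<in> carrier (RAAG VL EL)" using Fcar gen_car u unfolding C_def by blast
    have Yw: "rep ?Y \<in> words VL" using rep_carrier[OF Yc] by blast
    have "H1_matrix VG EG f x (p u) = exp_sum (f (induced_hom VG EG p (raag_gen VL EL u))) x"
      by (simp add: H1_matrix_def ih)
    also have "\<dots> = exp_sum (induced_hom VG EG p ?Y) x" using assms(10) gen_car[OF u] unfolding C_def by simp
    also have "\<dots> = es (map (\<lambda>(a, s). (p a, s)) (rep ?Y)) x" unfolding induced_hom_def es_cls ..
    also have "\<dots> = (\<Sum>w\<in>{w\<in>VL. p w = x}. es (rep ?Y) w)" by (rule es_map[OF finL Yw])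
    also have "\<dots> = (\<Sum>w\<in>fiber VL p x. Mt w u)" by (simp add: fiber_def Mt_def H1_matrix_def exp_sum_es)
    finally show "H1_matrix VG EG f x (p u) = (\<Sum>w\<in>fiber VL p x. Mt w u)" .
  qed
  show ?thesis
    unfolding blow_up_def
  proof (intro ballI)
    fix x y u assume x: "x \<in> VG" and y: "y \<in> VG" and u: "u \<in> fiber VL p y"
    have uL: "u \<in> VL" and pu: "p u = y" using u by (auto simp: fiber_def)
    have finF: "finite (fiber VL p x)" using finL by (simp add: fiber_def)
    have S: "H1_matrix VG EG f x y = (\<Sum>w\<in>fiber VL p x. Mt w u)" using sumfib[OF uL] pu by simp
    show "\<exists>w\<in>fiber VL p x. H1_matrix VL EL F w u = H1_matrix VG EG f x y
        \<and> (\<forall>w'\<in>fiber VL p x. w' \<noteq> w \<longrightarrow> H1_matrix VL EL F w' u = 0)"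
    proof (cases "\<exists>w0\<in>fiber VL p x. Mt w0 u \<noteq> 0")
      case True
      then obtain w0 where w0: "w0 \<in> fiber VL p x" "Mt w0 u \<noteq> 0" by blast
      have others: "\<forall>w'\<in>fiber VL p x. w' \<noteq> w0 \<longrightarrow> Mt w' u = 0"
      proof (intro ballI impI)
        fix w' assume w': "w' \<in> fiber VL p x" "w' \<noteq> w0"
        show "Mt w' u = 0"
        proof (rule ccontr)
          assume "Mt w' u \<noteq> 0"
          then show False using atmost[OF uL, of w' w0] w' w0 by (auto simp: fiber_def)
        qed
      qed
      have "(\<Sum>w\<in>fiber VL p x. Mt w u) = Mt w0 u + (\<Sum>w\<in>fiber VL p x - {w0}. Mt w u)"
        by (rule sum.remove[OF finF w0(1)])
      also have "(\<Sum>w\<in>fiber VL p x - {w0}. Mt w u) = 0"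
        using others by (intro sum.neutral) auto
      finally have "(\<Sum>w\<in>fiber VL p x. Mt w u) = Mt w0 u" by simp
      then show ?thesis using S w0 others unfolding Mt_def by auto
    next
      case False
      then have z: "\<forall>w\<in>fiber VL p x. Mt w u = 0" by blast
      obtain w where w: "w \<in> fiber VL p x" using x pVL by (auto simp: fiber_def)
      have "H1_matrix VG EG f x y = 0" using S z by simp
      then show ?thesis using w z unfolding Mt_def by auto
    qed
  qed
qed

end
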